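(* Let $\mathcal{M}\subseteq\mathbb{R}^d$ be a compact embedded $C^2$-submanifold without boundary with reach $\tau_{\mathcal{M}}>0$. If $x\in\mathcal{T}(\tau_{\mathcal{M}})$, then $$\|P_0(\pi(x))-P_0(x)\|\le\kappa^{\mathcal{M}}_{\pi(x)}(x-\pi(x))\Big(1-\frac{\|\pi(x)-x\|}{\rho(\pi(x),x-\pi(x))}\Big)^{-1}\|x-\pi(x)\|\le\frac{\|x-\pi(x)\|\kappa_{\mathcal{M}}}{1-\|x-\pi(x)\|\kappa_{\mathcal{M}}}\le\frac{\|x-\pi(x)\|/\tau_{\mathcal{M}}}{1-\|x-\pi(x)\|/\tau_{\mathcal{M}}}.$$
   Context: Reach $\tau_{\mathcal{M}}$: largest $\tau\ge0$ such that $(p,v)\mapsto p+v$ on $\{(p,v):p\in\mathcal{M},v\in N_p\mathcal{M},\|v\|<\tau\}$ is a diffeomorphism onto its image; $\mathcal{T}(\tau)=\{p+v:p\in\mathcal{M},v\in N_p\mathcal{M},\|v\|<\tau\}$. $\pi(x)$ is the unique closest point of $\mathcal{M}$ to $x$, and $P_0(x)=\pi'(x)$ is its Jacobian (so $P_0(p)$ is the orthogonal projection onto $T_p\mathcal{M}$ for $p\in\mathcal{M}$). $\mathrm{II}_p:T_p\mathcal{M}\times T_p\mathcal{M}\to N_p\mathcal{M}$ is the second fundamental form; for $u\in N_p\mathcal{M}$ the Weingarten map $S_p^u:T_p\mathcal{M}\to T_p\mathcal{M}$ is the self-adjoint operator with $\langle w,S_p^u v\rangle=\langle\mathrm{II}_p(v,w),u\rangle$.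 For nonzero $u\in N_p\mathcal{M}$: $\frac{1}{\rho(p,u)}=\max\big(\operatorname{eig}(S_p^{u/\|u\|})\cup\{0\}\big)$, $\kappa_p^{\mathcal{M}}(u)=\max|\operatorname{eig}(S_p^{u/\|u\|})|$, and $\kappa_{\mathcal{M}}=\max_{(p,u)}\kappa_p^{\mathcal{M}}(u)$ over the normal bundle. It holds that $\kappa_{\mathcal{M}}\le1/\tau_{\mathcal{M}}$. *)

theory Defs
  imports "HOL-Analysis.Analysis"
begin

definition orth_compl :: "'a::euclidean_space set \<Rightarrow> 'a set" where
  "orth_compl T = {u. \<forall>v\<in>T. inner u v = 0}"

definition graph_chart ::
  "'a::euclidean_space set \<Rightarrow> 'a \<Rightarrow> 'a set \<Rightarrow> real \<Rightarrow> ('a \<Rightarrow> 'a) \<Rightarrow> bool" where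
  "graph_chart M p T r g \<longleftrightarrow> subspace T \<and> 0 < r \<and> g 0 = 0 \<and>
     (\<forall>v\<in>T \<inter> ball 0 r. g v \<in> orth_compl T) \<and>
     (\<exists>(Dg :: 'a \<Rightarrow> 'a \<Rightarrow>\<^sub>L 'a) (D2g :: 'a \<Rightarrow> 'a \<Rightarrow>\<^sub>L ('a \<Rightarrow>\<^sub>L 'a)).
        (\<forall>y\<in>ball 0 r. (g has_derivative blinfun_apply (Dg y)) (at y) \<and>
                        (Dg has_derivative blinfun_apply (D2g y)) (at y)) \<and>
        continuous_on (ball 0 r) D2g \<and> Dg 0 = 0) \<and>
     (\<exists>W. open W \<and> p \<in> W \<and> M \<inter> W = (\<lambda>v. p + v + g v) ` (T \<inter> ball 0 r))"

definition C2_submanifold :: "'a::euclidean_space set \<Rightarrow> bool" where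
  "C2_submanifold M \<longleftrightarrow> (\<forall>p\<in>M. \<exists>T r g. graph_chart M p T r g)"

definition tangent_space :: "'a::euclidean_space set \<Rightarrow> 'a \<Rightarrow> 'a set" where
  "tangent_space M p = (SOME T. \<exists>r g. graph_chart M p T r g)"

definition normal_space :: "'a::euclidean_space set \<Rightarrow> 'a \<Rightarrow> 'a set" where
  "normal_space M p = orth_compl (tangent_space M p)"

text \<open>Second fundamental form II_p(v,w) = D^2 g(0)(v,w) for a graph chart at p.\<close>
definition sff :: "'a::euclidean_space set \<Rightarrow> 'a \<Rightarrow> 'a \<Rightarrow> 'a \<Rightarrow> 'a" where
  "sff M p v w =
     (let g = (SOME g. \<exists>r. graph_chart M p (tangent_space M p) r g)
      in frechet_derivative (\<lambda>y. frechet_derivative g (at y) w) (at 0) v)"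

definition weingarten :: "'a::euclidean_space set \<Rightarrow> 'a \<Rightarrow> 'a \<Rightarrow> 'a \<Rightarrow> 'a" where
  "weingarten M p u v = (SOME s. s \<in> tangent_space M p \<and>
      (\<forall>w\<in>tangent_space M p. inner w s = inner (sff M p v w) u))"

definition weingarten_eigs :: "'a::euclidean_space set \<Rightarrow> 'a \<Rightarrow> 'a \<Rightarrow> real set" where
  "weingarten_eigs M p u = {c. \<exists>v\<in>tangent_space M p. v \<noteq> 0 \<and> weingarten M p u v = c *\<^sub>R v}"

text \<open>inv_rho M p u = 1 / rho(p,u) = max (eig(S_p^{u/|u|}) \<union> {0}).\<close>
definition inv_rho :: "'a::euclidean_space set \<Rightarrow> 'a \<Rightarrow> 'a \<Rightarrow> real" where
  "inv_rho M p u = Max (weingarten_eigs M p (u /\<^sub>R norm u) \<union> {0})"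

definition kappa_at :: "'a::euclidean_space set \<Rightarrow> 'a \<Rightarrow> 'a \<Rightarrow> real" where
  "kappa_at M p u = Max (abs ` weingarten_eigs M p (u /\<^sub>R norm u) \<union> {0})"

definition kappa :: "'a::euclidean_space set \<Rightarrow> real" where
  "kappa M = Sup {kappa_at M p u | p u. p \<in> M \<and> u \<in> normal_space M p \<and> u \<noteq> 0}"

definition normal_bundle_lt :: "'a::euclidean_space set \<Rightarrow> real \<Rightarrow> ('a \<times> 'a) set" where
  "normal_bundle_lt M \<tau> = {(p, v). p \<in> M \<and> v \<in> normal_space M p \<and> norm v < \<tau>}"

definition tube :: "'a::euclidean_space set \<Rightarrow> real \<Rightarrow> 'a set" where
  "tube M \<tau> = {p + v | p v. p \<in> M \<and> v \<in> normal_space M p \<and> norm v < \<tau>}"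

definition normal_diffeo :: "'a::euclidean_space set \<Rightarrow> real \<Rightarrow> bool" where
  "normal_diffeo M \<tau> \<longleftrightarrow>
     inj_on (\<lambda>(p, v). p + v) (normal_bundle_lt M \<tau>) \<and> open (tube M \<tau>) \<and>
     (\<exists>(G :: 'a \<Rightarrow> 'a \<times> 'a) (G' :: 'a \<Rightarrow> 'a \<Rightarrow>\<^sub>L ('a \<times> 'a)).
        (\<forall>(p, v)\<in>normal_bundle_lt M \<tau>. G (p + v) = (p, v)) \<and>
        (\<forall>x\<in>tube M \<tau>. (G has_derivative blinfun_apply (G' x)) (at x)) \<and>
        continuous_on (tube M \<tau>) G')"

definition reach :: "'a::euclidean_space set \<Rightarrow> real" where
  "reach M = Sup {\<tau>. \<tau> \<ge> 0 \<and> normal_diffeo M \<tau>}"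

definition proj :: "'a::euclidean_space set \<Rightarrow> 'a \<Rightarrow> 'a" where
  "proj M x = (THE p. p \<in> M \<and> (\<forall>q\<in>M. dist x p \<le> dist x q))"

definition P0 :: "'a::euclidean_space set \<Rightarrow> 'a \<Rightarrow> 'a \<Rightarrow>\<^sub>L 'a" where
  "P0 M x = (THE L. (proj M has_derivative blinfun_apply L) (at x))"

end

theory Submission
  imports Defs
begin

lemma schwarz_at:
  fixes g :: "'a::euclidean_space \<Rightarrow> 'b::real_normed_vector"
    and Dg :: "'a \<Rightarrow> 'a \<Rightarrow>\<^sub>L 'b" and D2 :: "'a \<Rightarrow>\<^sub>L ('a \<Rightarrow>\<^sub>L 'b)"
  assumes r: "r > 0"
    and dg: "\<And>y. y \<in> ball 0 r \<Longrightarrow> (g has_derivative blinfun_apply (Dg y)) (at y)"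
    and d2: "(Dg has_derivative blinfun_apply D2) (at 0)"
  shows "blinfun_apply (blinfun_apply D2 v) w = blinfun_apply (blinfun_apply D2 w) v"
proof -
  define Dl where "Dl a b s = g (s *\<^sub>R a + s *\<^sub>R b) - g (s *\<^sub>R a) - g (s *\<^sub>R b) + g 0" for a b and s :: real
  have key: "\<exists>d>0. \<forall>s. 0 < s \<and> s < d \<longrightarrow>
      norm (Dl v w s - (s * s) *\<^sub>R blinfun_apply (blinfun_apply D2 w) v) \<le> e * (s * s)"
    if e: "e > 0" for v w e
  proof -
    define n where "n = 2 * norm v + norm w + 1"
    have n: "n > 0" "norm v + norm w < n" unfolding n_def using norm_ge_zero[of v] norm_ge_zero[of w] by linarith+
    define \<eta> where "\<eta> = e / (n * n)"
    have eta: "\<eta> > 0" using e n by (simp add: \<eta>_def)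
    obtain d0 where d0: "d0 > 0" and
      R: "\<And>y. norm y < d0 \<Longrightarrow> norm (Dg y - Dg 0 - blinfun_apply D2 y) \<le> \<eta> * norm y"
      using d2[unfolded has_derivative_at_alt] eta by (metis diff_zero)
    define d where "d = min r d0 / n"
    have "d > 0" using d0 r n by (simp add: d_def)
    moreover have "norm (Dl v w s - (s * s) *\<^sub>R blinfun_apply (blinfun_apply D2 w) v) \<le> e * (s * s)"
      if s: "0 < s" "s < d" for s
    proof -
      have sn: "s * n < min r d0" using s n by (simp add: d_def pos_less_divide_eq mult.commute)
      define S where "S = closed_segment 0 (s *\<^sub>R v)"
      have inS: "norm \<xi> \<le> s * norm v" if "\<xi> \<in> S" for \<xi>
        using that segment_bound(1)[of \<xi> 0 "s *\<^sub>R v"] s by (simp add: S_def)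
      define R where "R y = Dg y - Dg 0 - blinfun_apply D2 y" for y
      define \<psi> where "\<psi> \<xi> = g (\<xi> + s *\<^sub>R w) - g \<xi> - blinfun_apply (blinfun_apply D2 (s *\<^sub>R w)) \<xi>" for \<xi>
      define \<psi>' where "\<psi>' \<xi> = Dg (\<xi> + s *\<^sub>R w) - Dg \<xi> - blinfun_apply D2 (s *\<^sub>R w)" for \<xi>
      have \<psi>'eq: "\<psi>' \<xi> = R (\<xi> + s *\<^sub>R w) - R \<xi>" for \<xi>
        by (simp add: \<psi>'_def R_def blinfun.bilinear_simps algebra_simps)
      have norms: "norm (\<xi> + s *\<^sub>R w) < min r d0" "norm \<xi> < min r d0" if "\<xi> \<in> S" for \<xi>
      proof -
        have "norm (\<xi> + s *\<^sub>R w) \<le> s * norm v + s * norm w"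
          using inS[OF that] s by (smt (verit) norm_scaleR norm_triangle_ineq)
        also have "\<dots> < min r d0" using sn n s
          by (smt (verit, ccfv_SIG) mult_strict_left_mono distrib_left)
        finally show "norm (\<xi> + s *\<^sub>R w) < min r d0" .
        have "norm \<xi> \<le> s * n" using inS[OF that] s n
          by (smt (verit) mult_left_mono norm_ge_zero)
        then show "norm \<xi> < min r d0" using sn by linarith
      qed
      have der: "(\<psi> has_derivative blinfun_apply (\<psi>' \<xi>)) (at \<xi> within S)" if "\<xi> \<in> S" for \<xi>
      proof -
        have a: "\<xi> + s *\<^sub>R w \<in> ball 0 r" "\<xi> \<in> ball 0 r" using norms[OF that] by (auto simp: mem_ball_0)
        have "((\<lambda>\<xi>. g (\<xi> + s *\<^sub>R w)) has_derivative blinfun_apply (Dg (\<xi> + s *\<^sub>R w))) (at \<xi>)"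
          using has_derivative_compose[OF has_derivative_add[OF has_derivative_ident has_derivative_const[of "s *\<^sub>R w"]] dg[OF a(1)]]
          by simp
        then have "(\<psi> has_derivative (\<lambda>k. blinfun_apply (Dg (\<xi> + s *\<^sub>R w)) k - blinfun_apply (Dg \<xi>) k
             - blinfun_apply (blinfun_apply D2 (s *\<^sub>R w)) k)) (at \<xi>)"
          unfolding \<psi>_def
          by (intro has_derivative_diff dg[OF a(2)] bounded_linear.has_derivative[OF blinfun.bounded_linear_right has_derivative_ident] | simp)+
        moreover have "blinfun_apply (\<psi>' \<xi>) = (\<lambda>k. blinfun_apply (Dg (\<xi> + s *\<^sub>R w)) k - blinfun_apply (Dg \<xi>) k
             - blinfun_apply (blinfun_apply D2 (s *\<^sub>R w)) k)"
          by (rule ext) (simp add: \<psi>'_def blinfun.bilinear_simps)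
        ultimately show ?thesis
          by (metis has_derivative_at_withinI)
      qed
      have bnd: "onorm (blinfun_apply (\<psi>' \<xi>)) \<le> \<eta> * (s * n)" if "\<xi> \<in> S" for \<xi>
      proof -
        have "onorm (blinfun_apply (\<psi>' \<xi>)) = norm (R (\<xi> + s *\<^sub>R w) - R \<xi>)"
          by (simp add: \<psi>'eq norm_blinfun.rep_eq)
        also have "\<dots> \<le> norm (R (\<xi> + s *\<^sub>R w)) + norm (R \<xi>)" by (rule norm_triangle_ineq4)
        also have "\<dots> \<le> \<eta> * norm (\<xi> + s *\<^sub>R w) + \<eta> * norm \<xi>"
          using R norms[OF that] unfolding R_def by (intro add_mono) (auto simp: blinfun.diff_left)
        also have "\<dots> \<le> \<eta> * (s * n)"
        proof -
          have "norm (\<xi> + s *\<^sub>R w) + norm \<xi> \<le> (s * norm v + s * norm w) + s * norm v"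
            using inS[OF that] s by (smt (verit) norm_scaleR norm_triangle_ineq)
          also have "\<dots> \<le> s * n" using s by (simp add: n_def algebra_simps)
          finally show ?thesis using eta by (smt (verit) distrib_left mult_left_mono)
        qed
        finally show ?thesis .
      qed
      have "norm (\<psi> (s *\<^sub>R v) - \<psi> 0) \<le> \<eta> * (s * n) * norm (s *\<^sub>R v - 0)"
        by (rule differentiable_bound[OF convex_closed_segment[of 0 "s *\<^sub>R v", folded S_def] der bnd]) (auto simp: S_def)
      also have "\<dots> \<le> \<eta> * (s * n) * (s * n)"
      proof -
        have "norm v \<le> n" using n(2) norm_ge_zero[of w] by linarith
        then have "norm (s *\<^sub>R v - 0) \<le> s * n" using s by (simp add: mult_left_mono)
        moreover have "0 \<le> \<eta> * (s * n)" using s n eta by simp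
        ultimately show ?thesis by (rule mult_left_mono)
      qed
      also have "\<dots> = e * (s * s)" using n by (simp add: \<eta>_def)
      finally have "norm (\<psi> (s *\<^sub>R v) - \<psi> 0) \<le> e * (s * s)" .
      moreover have "\<psi> (s *\<^sub>R v) - \<psi> 0 = Dl v w s - (s * s) *\<^sub>R blinfun_apply (blinfun_apply D2 w) v"
      proof -
        have "blinfun_apply (blinfun_apply D2 (s *\<^sub>R w)) (s *\<^sub>R v) = (s * s) *\<^sub>R blinfun_apply (blinfun_apply D2 w) v"
          by (simp add: blinfun.scaleR_left blinfun.scaleR_right)
        then show ?thesis by (simp add: \<psi>_def Dl_def blinfun.zero_right)
      qed
      ultimately show ?thesis by simp
    qed
    ultimately show ?thesis by blast
  qed
  let ?a = "blinfun_apply (blinfun_apply D2 w) v" and ?b = "blinfun_apply (blinfun_apply D2 v) w"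
  have main: "norm (?a - ?b) \<le> e" if e: "e > 0" for e
  proof -
    obtain d1 where d1: "d1 > 0" "\<And>s. 0 < s \<and> s < d1 \<Longrightarrow> norm (Dl v w s - (s * s) *\<^sub>R ?a) \<le> e/2 * (s * s)"
      using key[of "e/2" v w] e by auto
    obtain d2 where d2: "d2 > 0" "\<And>s. 0 < s \<and> s < d2 \<Longrightarrow>
        norm (Dl w v s - (s * s) *\<^sub>R ?b) \<le> e/2 * (s * s)"
      using key[of "e/2" w v] e by auto
    define s where "s = min d1 d2 / 2"
    have s: "0 < s" "s < d1" "s < d2" using d1 d2 by (auto simp: s_def)
    have "Dl v w s = Dl w v s"
      by (simp add: Dl_def add.commute)
    then have eqd: "(s * s) *\<^sub>R (?a - ?b) = (Dl w v s - (s * s) *\<^sub>R ?b) - (Dl v w s - (s * s) *\<^sub>R ?a)"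
      by (simp add: scaleR_diff_right)
    have "norm ((s * s) *\<^sub>R (?a - ?b)) \<le> norm (Dl w v s - (s * s) *\<^sub>R ?b) + norm (Dl v w s - (s * s) *\<^sub>R ?a)"
      unfolding eqd by (rule norm_triangle_ineq4)
    also have "\<dots> \<le> e/2 * (s * s) + e/2 * (s * s)"
      using d1(2)[of s] d2(2)[of s] s by (intro add_mono) auto
    finally have "norm ((s * s) *\<^sub>R (?a - ?b)) \<le> e/2 * (s * s) + e/2 * (s * s)" .
    moreover have "norm ((s * s) *\<^sub>R (?a - ?b)) = (s * s) * norm (?a - ?b)" using s by simp
    moreover have "e/2 * (s * s) + e/2 * (s * s) = (s * s) * e" by (simp add: field_simps)
    ultimately have "(s * s) * norm (?a - ?b) \<le> (s * s) * e" by linarith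
    then show ?thesis using s by (metis mult_le_cancel_left_pos mult_pos_pos)
  qed
  have "norm (?a - ?b) \<le> 0 + e" if "e>0" for e using main[OF that] by simp
  then have "norm (?a - ?b) \<le> 0" by (rule field_le_epsilon)
  then show ?thesis by simp
qed

definition oproj :: "'a::euclidean_space set \<Rightarrow> 'a \<Rightarrow> 'a" where
  "oproj T z = (SOME y. y \<in> T \<and> (\<forall>w\<in>T. inner (z - y) w = 0))"

lemma oproj_ex:
  fixes T :: "'a::euclidean_space set"
  assumes "subspace T"
  shows "\<exists>y. y \<in> T \<and> (\<forall>w\<in>T. inner (z - y) w = 0)"
proof -
  obtain y z' where "y \<in> span T" "\<And>w. w \<in> span T \<Longrightarrow> orthogonal z' w" "z = y + z'"
    using orthogonal_subspace_decomp_exists[of T z] by blast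
  then have "y \<in> T" "\<And>w. w \<in> T \<Longrightarrow> inner (z - y) w = 0"
    using assms by (auto simp: orthogonal_def span_eq_iff[THEN iffD2, OF assms])
  then show ?thesis by blast
qed

lemma oproj:
  fixes T :: "'a::euclidean_space set"
  assumes "subspace T"
  shows "oproj T z \<in> T" "\<And>w. w \<in> T \<Longrightarrow> inner (z - oproj T z) w = 0"
  using someI_ex[OF oproj_ex[OF assms, of z]] unfolding oproj_def by auto

lemma sub_orth_zero:
  fixes T :: "'a::euclidean_space set"
  assumes "subspace T" "y \<in> T" "\<And>w. w \<in> T \<Longrightarrow> inner y w = 0"
  shows "y = 0"
  using assms(3)[OF assms(2)] by simp

lemma oproj_unique:
  fixes T :: "'a::euclidean_space set"
  assumes T: "subspace T" and y: "y \<in> T" "\<And>w. w \<in> T \<Longrightarrow> inner (z - y) w = 0"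
  shows "oproj T z = y"
proof -
  have "oproj T z - y = 0"
  proof (rule sub_orth_zero[OF T])
    show "oproj T z - y \<in> T" using oproj(1)[OF T] y T by (simp add: subspace_diff)
    fix w assume w: "w \<in> T"
    have "inner (oproj T z - y) w = inner (z - y) w - inner (z - oproj T z) w"
      by (simp add: inner_diff_left)
    then show "inner (oproj T z - y) w = 0" using y(2)[OF w] oproj(2)[OF T w] by simp
  qed
  then show ?thesis by simp
qed

lemma oproj_id:
  fixes T :: "'a::euclidean_space set"
  assumes "subspace T" "z \<in> T" shows "oproj T z = z"
  using oproj_unique[OF assms(1) assms(2)] by simp

lemma oproj_inner:
  fixes T :: "'a::euclidean_space set"
  assumes "subspace T" "w \<in> T" shows "inner (oproj T z) w = inner z w"
  using oproj(2)[OF assms] by (simp add: inner_diff_left)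

lemma oproj_linear:
  fixes T :: "'a::euclidean_space set"
  assumes T: "subspace T" shows "linear (oproj T)"
proof (rule linearI)
  fix x y
  show "oproj T (x + y) = oproj T x + oproj T y"
    by (rule oproj_unique[OF T]) (auto simp: oproj[OF T] subspace_add T inner_diff_left inner_add_left
         oproj_inner[OF T])
next
  fix c :: real and x
  show "oproj T (c *\<^sub>R x) = c *\<^sub>R oproj T x"
    by (rule oproj_unique[OF T]) (auto simp: oproj[OF T] subspace_scale T inner_diff_left
         oproj_inner[OF T])
qed

lemma oproj_bounded_linear:
  fixes T :: "'a::euclidean_space set"
  assumes T: "subspace T" shows "bounded_linear (oproj T)"
  using oproj_linear[OF T] by (simp add: linear_conv_bounded_linear)

lemma oproj_norm:
  fixes T :: "'a::euclidean_space set"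
  assumes T: "subspace T" shows "norm (oproj T z) \<le> norm z"
proof -
  have "z = oproj T z + (z - oproj T z)" by simp
  have o: "inner (oproj T z) (z - oproj T z) = 0"
    using oproj(2)[OF T oproj(1)[OF T]] by (simp add: inner_commute)
  have "(norm z)^2 = (norm (oproj T z))^2 + (norm (z - oproj T z))^2"
    using norm_add_Pythagorean[of "oproj T z" "z - oproj T z"] o by (simp add: orthogonal_def)
  then have "(norm (oproj T z))^2 \<le> (norm z)^2" by simp
  then show ?thesis by (simp add: power2_le_iff_abs_le)
qed

lemma oproj_orth_compl:
  fixes T :: "'a::euclidean_space set"
  assumes T: "subspace T" and "z \<in> orth_compl T" shows "oproj T z = 0"
  using assms by (intro oproj_unique) (auto simp: orth_compl_def subspace_0)

lemma first_order:
  fixes g :: "'a::euclidean_space \<Rightarrow> 'a"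
  assumes T: "subspace T" and inM: "\<And>v. v \<in> T \<Longrightarrow> v \<in> ball 0 r \<Longrightarrow> p + v + g v \<in> M"
    and v0: "v0 \<in> T" "v0 \<in> ball 0 r" and dg: "(g has_derivative G') (at v0)"
    and near: "\<And>q'. q' \<in> M \<Longrightarrow> dist y (p + v0 + g v0) \<le> dist y q'"
    and w: "w \<in> T"
  shows "inner (y - (p + v0 + g v0)) (w + G' w) = 0"
proof -
  define c where "c s = y - (p + (v0 + s *\<^sub>R w) + g (v0 + s *\<^sub>R w))" for s :: real
  define \<phi> where "\<phi> s = inner (c s) (c s)" for s
  have lin: "linear G'" using dg by (rule has_derivative_linear)
  have d1: "((\<lambda>s::real. v0 + s *\<^sub>R w) has_derivative (\<lambda>s. s *\<^sub>R w)) (at 0)"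
    by (auto intro!: derivative_eq_intros)
  have "((\<lambda>s::real. g (v0 + s *\<^sub>R w)) has_derivative (\<lambda>s. G' (s *\<^sub>R w))) (at 0)"
    using has_derivative_compose[OF d1, of g G'] dg by simp
  then have dc: "(c has_derivative (\<lambda>s. - (s *\<^sub>R w + G' (s *\<^sub>R w)))) (at 0)"
    unfolding c_def by (auto intro!: derivative_eq_intros)
  have c0: "c 0 = y - (p + v0 + g v0)" by (simp add: c_def)
  have "(\<phi> has_derivative (\<lambda>h. inner (c 0) (- (h *\<^sub>R w + G' (h *\<^sub>R w))) + inner (- (h *\<^sub>R w + G' (h *\<^sub>R w))) (c 0))) (at 0)"
    unfolding \<phi>_def by (rule has_derivative_inner[OF dc dc])
  moreover have "(\<lambda>h. inner (c 0) (- (h *\<^sub>R w + G' (h *\<^sub>R w))) + inner (- (h *\<^sub>R w + G' (h *\<^sub>R w))) (c 0))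
      = (*) (- 2 * inner (c 0) (w + G' w))"
    by (rule ext) (simp add: linear_cmul[OF lin] inner_commute[of _ "c 0"] inner_add_right algebra_simps)
  ultimately have D: "DERIV \<phi> 0 :> - 2 * inner (c 0) (w + G' w)"
    by (simp add: has_field_derivative_def)
  define \<delta> where "\<delta> = (r - norm v0) / (norm w + 1)"
  have pw: "0 < norm w + 1" by (smt (verit) norm_ge_zero)
  have \<delta>: "\<delta> > 0" using v0(2) norm_ge_zero[of w] unfolding \<delta>_def mem_ball_0 by (intro divide_pos_pos) linarith+
  have "\<phi> 0 \<le> \<phi> s" if s: "\<bar>0 - s\<bar> < \<delta>" for s
  proof -
    have "norm (s *\<^sub>R w) \<le> \<bar>s\<bar> * (norm w + 1)" by (simp add: mult_left_mono)
    also have "\<dots> < \<delta> * (norm w + 1)" using s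
      using pw by (intro mult_strict_right_mono) auto
    also have "\<dots> = r - norm v0" using norm_ge_zero[of w] unfolding \<delta>_def
      by (metis add_nonneg_pos less_numeral_extra(1) nonzero_eq_divide_eq order_less_irrefl)
    finally have "norm (v0 + s *\<^sub>R w) < r" using norm_triangle_ineq[of v0 "s *\<^sub>R w"] by linarith
    then have "p + (v0 + s *\<^sub>R w) + g (v0 + s *\<^sub>R w) \<in> M"
      using inM[of "v0 + s *\<^sub>R w"] v0 w T by (auto simp: subspace_add subspace_scale)
    from near[OF this] have "norm (c 0) \<le> norm (c s)"
      by (simp add: c_def dist_norm)
    then show ?thesis by (simp add: \<phi>_def power2_norm_eq_inner[symmetric] power_mono)
  qed
  then have "- 2 * inner (c 0) (w + G' w) = 0"
    using DERIV_local_min[OF D \<delta>] by blast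
  then show ?thesis by (simp add: c0)
qed

definition spec_basis :: "'a::euclidean_space set \<Rightarrow> ('a \<Rightarrow> 'a) \<Rightarrow> 'a set \<Rightarrow> bool" where
  "spec_basis T S B \<longleftrightarrow> B \<subseteq> T \<and> finite B \<and> (\<forall>b\<in>B. norm b = 1) \<and> pairwise orthogonal B \<and>
     (\<forall>b\<in>B. S b = inner b (S b) *\<^sub>R b) \<and> (\<forall>a\<in>T. a = (\<Sum>b\<in>B. inner a b *\<^sub>R b))"

lemma spectral:
  fixes S :: "'a::euclidean_space \<Rightarrow> 'a"
  assumes "subspace T" "linear S" "\<And>a. a \<in> T \<Longrightarrow> S a \<in> T"
    "\<And>a b. a \<in> T \<Longrightarrow> b \<in> T \<Longrightarrow> inner b (S a) = inner a (S b)"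
  shows "\<exists>B. spec_basis T S B"
  using assms
proof (induction "dim T" arbitrary: T rule: less_induct)
  case less
  note T = less.prems(1) and lin = less.prems(2) and ST = less.prems(3) and sa = less.prems(4)
  show ?case
  proof (cases "T = {0}")
    case True
    then show ?thesis by (auto simp: spec_basis_def intro!: exI[of _ "{}"])
  next
    case False
    then obtain a0 where a0: "a0 \<in> T" "a0 \<noteq> 0" using T subspace_0 by blast
    define K where "K = T \<inter> sphere 0 1"
    have "compact K" unfolding K_def
      by (intro closed_Int_compact closed_subspace T compact_sphere)
    moreover have "(1 / norm a0) *\<^sub>R a0 \<in> K" using a0 T by (auto simp: K_def subspace_scale)
    then have "K \<noteq> {}" by blast
    moreover have "continuous_on K (\<lambda>a. inner a (S a))"
      using lin by (intro continuous_intros linear_continuous_on) (auto simp: linear_conv_bounded_linear)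
    ultimately obtain e where eK: "e \<in> K" and emax: "\<And>a. a \<in> K \<Longrightarrow> inner a (S a) \<le> inner e (S e)"
      using continuous_attains_sup[of K "\<lambda>a. inner a (S a)"] by blast
    define l where "l = inner e (S e)"
    have eT: "e \<in> T" and en: "norm e = 1" using eK by (auto simp: K_def)
    have bound: "inner a (S a) \<le> l * (norm a)^2" if a: "a \<in> T" for a
    proof (cases "a = 0")
      case True then show ?thesis using lin by (simp add: linear_0)
    next
      case False
      let ?a = "(1 / norm a) *\<^sub>R a"
      have "?a \<in> K" using a False T by (auto simp: K_def subspace_scale)
      then have "inner ?a (S ?a) \<le> l" using emax l_def by blast
      moreover have "inner ?a (S ?a) = inner a (S a) / (norm a)^2"
        using lin by (simp add: linear_scale power2_eq_square)
      ultimately have h: "inner a (S a) / (norm a)^2 \<le> l" by linarith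
      have "0 < (norm a)^2" using False by simp
      with h show ?thesis by (simp add: pos_divide_le_eq mult.commute)
    qed
    have eig: "S e = l *\<^sub>R e"
    proof -
      have c0: "l * inner e w - inner w (S e) = 0" if w: "w \<in> T" for w
      proof (rule ccontr)
        define c where "c = l * inner e w - inner w (S e)"
        define q where "q = l * (norm w)^2 - inner w (S w)"
        assume "l * inner e w - inner w (S e) \<noteq> 0"
        then have c: "c \<noteq> 0" by (simp add: c_def)
        have q: "q \<ge> 0" using bound[OF w] by (simp add: q_def)
        have Q: "0 \<le> 2 * s * c + s^2 * q" for s
        proof -
          have "e + s *\<^sub>R w \<in> T" using eT w T by (simp add: subspace_add subspace_scale)
          from bound[OF this]
          have "0 \<le> l * (norm (e + s *\<^sub>R w))^2 - inner (e + s *\<^sub>R w) (S (e + s *\<^sub>R w))" by simp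
          also have "\<dots> = 2 * s * c + s^2 * q"
          proof -
            have sym: "inner e (S w) = inner w (S e)" using sa[OF w eT] .
            have ee: "inner e e = 1" using en by (simp add: power2_norm_eq_inner[symmetric])
            have A: "inner (e + s *\<^sub>R w) (e + s *\<^sub>R w) = 1 + 2 * s * inner e w + s^2 * inner w w"
              by (simp add: inner_add_left inner_add_right inner_commute[of w e] ee power2_eq_square algebra_simps)
            have B: "inner (e + s *\<^sub>R w) (S (e + s *\<^sub>R w)) = l + 2 * s * inner w (S e) + s^2 * inner w (S w)"
              using lin by (simp add: linear_add linear_scale inner_add_left inner_add_right l_def sym
                  power2_eq_square algebra_simps)
            show ?thesis
              unfolding c_def q_def power2_norm_eq_inner A B by (simp add: algebra_simps power2_eq_square)
          qed
          finally show ?thesis .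
        qed
        define s where "s = - c / (q + 1)"
        have sk: "c = - s * (q + 1)" using q by (simp add: s_def)
        have s0: "s \<noteq> 0" using c sk by auto
        have "2 * s * c + s^2 * q = - (s^2 * (q + 2))"
          by (simp add: sk power2_eq_square algebra_simps)
        also have "\<dots> < 0" using s0 q by (simp add: add_nonneg_pos)
        finally show False using Q[of s] by simp
      qed
      have "S e - l *\<^sub>R e = 0"
      proof (rule sub_orth_zero[OF T])
        show "S e - l *\<^sub>R e \<in> T" using ST[OF eT] eT T by (simp add: subspace_diff subspace_scale)
        fix w assume "w \<in> T"
        then show "inner (S e - l *\<^sub>R e) w = 0"
          using c0[of w] by (simp add: inner_diff_left inner_commute algebra_simps)
      qed
      then show ?thesis by simp
    qed
    define T' where "T' = {a \<in> T. inner a e = 0}"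
    have T': "subspace T'" using T unfolding T'_def subspace_def
      by (auto simp: inner_add_left)
    have "inner e e = 1" using en by (simp add: power2_norm_eq_inner[symmetric])
    then have "e \<notin> T'" by (simp add: T'_def)
    then have "T' \<subset> T" using eT unfolding T'_def by blast
    then have "dim T' < dim T" using T T' by (intro dim_psubset) (simp add: span_eq_iff[THEN iffD2])
    moreover have "S a \<in> T'" if "a \<in> T'" for a
    proof -
      have "inner e (S a) = inner a (S e)" using that by (intro sa) (auto simp: T'_def eT)
      then show ?thesis using that ST eig by (auto simp: T'_def inner_commute)
    qed
    ultimately obtain B' where B': "spec_basis T' S B'"
      using less.hyps[OF _ T' lin] sa by (auto simp: T'_def)
    have eB': "e \<notin> B'" using B' en by (auto simp: spec_basis_def T'_def power2_norm_eq_inner[symmetric])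
    have orthB': "inner b e = 0" if "b \<in> B'" for b using B' that by (auto simp: spec_basis_def T'_def)
    have "spec_basis T S (insert e B')"
      unfolding spec_basis_def
    proof (intro conjI ballI)
      show "insert e B' \<subseteq> T" using B' eT by (auto simp: spec_basis_def T'_def)
      show "finite (insert e B')" using B' by (simp add: spec_basis_def)
      show "norm b = 1" if "b \<in> insert e B'" for b using B' en that by (auto simp: spec_basis_def)
      show "pairwise orthogonal (insert e B')"
        using B' orthB' by (auto simp: spec_basis_def pairwise_insert orthogonal_def inner_commute)
      show "S b = inner b (S b) *\<^sub>R b" if "b \<in> insert e B'" for b
        using B' eig en that by (auto simp: spec_basis_def power2_norm_eq_inner[symmetric])
      fix a assume a: "a \<in> T"
      define a' where "a' = a - inner a e *\<^sub>R e"
      have "a' \<in> T'" using a eT T en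
        by (auto simp: a'_def T'_def subspace_diff subspace_scale inner_diff_left power2_norm_eq_inner[symmetric])
      then have "a' = (\<Sum>b\<in>B'. inner a' b *\<^sub>R b)" using B' by (auto simp: spec_basis_def)
      also have "\<dots> = (\<Sum>b\<in>B'. inner a b *\<^sub>R b)"
        by (intro sum.cong refl) (simp add: a'_def inner_diff_left orthB' inner_commute[of e])
      finally have "a = inner a e *\<^sub>R e + (\<Sum>b\<in>B'. inner a b *\<^sub>R b)" by (simp add: a'_def algebra_simps)
      then show "a = (\<Sum>b\<in>insert e B'. inner a b *\<^sub>R b)"
        using B' eB' by (simp add: spec_basis_def)
    qed
    then show ?thesis by blast
  qed
qed

lemma spec_apply:
  assumes B: "spec_basis T S B" and lin: "linear S" and a: "a \<in> T"
  shows "S a = (\<Sum>b\<in>B. (inner a b * inner b (S b)) *\<^sub>R b)"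
proof -
  have "S a = S (\<Sum>b\<in>B. inner a b *\<^sub>R b)" using B a by (auto simp: spec_basis_def)
  also have "\<dots> = (\<Sum>b\<in>B. inner a b *\<^sub>R S b)" by (simp add: linear_sum[OF lin] linear_scale[OF lin])
  also have "\<dots> = (\<Sum>b\<in>B. (inner a b * inner b (S b)) *\<^sub>R b)"
  proof (intro sum.cong refl)
    fix b assume b: "b \<in> B"
    have eq: "S b = inner b (S b) *\<^sub>R b" using B b unfolding spec_basis_def by blast
    show "inner a b *\<^sub>R S b = (inner a b * inner b (S b)) *\<^sub>R b" by (metis eq scaleR_scaleR)
  qed
  finally show ?thesis .
qed

lemma spec_norm2:
  assumes B: "spec_basis T S B"
  shows "(norm (\<Sum>b\<in>B. x b *\<^sub>R b))^2 = (\<Sum>b\<in>B. (x b)^2)"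
proof -
  have "pairwise (\<lambda>i j. orthogonal (x i *\<^sub>R i) (x j *\<^sub>R j)) B"
    using B by (auto simp: spec_basis_def pairwise_def orthogonal_clauses)
  then have "(norm (\<Sum>b\<in>B. x b *\<^sub>R b))^2 = (\<Sum>b\<in>B. (norm (x b *\<^sub>R b))^2)"
    using B by (intro norm_sum_Pythagorean) (auto simp: spec_basis_def)
  also have "\<dots> = (\<Sum>b\<in>B. (x b)^2)"
    using B by (intro sum.cong refl) (auto simp: spec_basis_def power2_eq_square)
  finally show ?thesis .
qed

lemma spec_eig:
  assumes B: "spec_basis T S B" and sa: "\<And>a b. a \<in> T \<Longrightarrow> b \<in> T \<Longrightarrow> inner b (S a) = inner a (S b)"
    and a: "a \<in> T" "a \<noteq> 0" "S a = \<mu> *\<^sub>R a"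
  shows "\<exists>b\<in>B. inner b (S b) = \<mu>"
proof -
  have "\<exists>b\<in>B. inner a b \<noteq> 0"
  proof (rule ccontr)
    assume "\<not> ?thesis"
    then have "(\<Sum>b\<in>B. inner a b *\<^sub>R b) = 0" by simp
    then show False using B a by (auto simp: spec_basis_def)
  qed
  then obtain b where b: "b \<in> B" "inner a b \<noteq> 0" by blast
  have bT: "b \<in> T" using B b by (auto simp: spec_basis_def)
  have "\<mu> * inner a b = inner b (S a)" using a by (simp add: inner_commute)
  also have "\<dots> = inner a (S b)" using sa[OF a(1) bT] .
  also have "\<dots> = inner b (S b) * inner a b"
    using B b by (subst (1) spec_basis_def[THEN iffD1, OF B, THEN conjunct2, THEN conjunct2,
        THEN conjunct2, THEN conjunct2, THEN conjunct1, rule_format, OF b(1)]) simp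
  finally show ?thesis using b by auto
qed

lemma resolvent_bound:
  assumes B: "spec_basis T S B" and lin: "linear S" and a: "a \<in> T" and C: "C \<ge> 0"
    and bnd: "\<And>b. b \<in> B \<Longrightarrow> \<bar>t * inner b (S b)\<bar> \<le> C * \<bar>1 - t * inner b (S b)\<bar>"
  shows "norm (t *\<^sub>R S a) \<le> C * norm (a - t *\<^sub>R S a)"
proof -
  define l where "l b = inner b (S b)" for b
  have Sa: "S a = (\<Sum>b\<in>B. (inner a b * l b) *\<^sub>R b)" using spec_apply[OF B lin a] by (simp add: l_def)
  have aa: "a = (\<Sum>b\<in>B. inner a b *\<^sub>R b)" using B a by (auto simp: spec_basis_def)
  have e1: "t *\<^sub>R S a = (\<Sum>b\<in>B. (t * inner a b * l b) *\<^sub>R b)"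
    by (simp add: Sa scaleR_sum_right mult.assoc)
  have e2: "a - t *\<^sub>R S a = (\<Sum>b\<in>B. (inner a b * (1 - t * l b)) *\<^sub>R b)"
    by (subst (1) aa) (simp add: e1 sum_subtractf[symmetric] algebra_simps)
  have "(norm (t *\<^sub>R S a))^2 = (\<Sum>b\<in>B. (t * inner a b * l b)^2)"
    unfolding e1 by (rule spec_norm2[OF B])
  also have "\<dots> \<le> (\<Sum>b\<in>B. (C * (inner a b * (1 - t * l b)))^2)"
  proof (intro sum_mono)
    fix b assume b: "b \<in> B"
    have "\<bar>t * inner a b * l b\<bar> = \<bar>inner a b\<bar> * \<bar>t * l b\<bar>" by (simp add: abs_mult)
    also have "\<dots> \<le> \<bar>inner a b\<bar> * (C * \<bar>1 - t * l b\<bar>)"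
      using bnd[OF b] by (intro mult_left_mono) (auto simp: l_def)
    also have "\<dots> = \<bar>C * (inner a b * (1 - t * l b))\<bar>" using C by (simp add: abs_mult)
    finally show "(t * inner a b * l b)^2 \<le> (C * (inner a b * (1 - t * l b)))^2"
      by (simp add: abs_le_square_iff)
  qed
  also have "\<dots> = C^2 * (\<Sum>b\<in>B. (inner a b * (1 - t * l b))^2)"
    by (simp add: sum_distrib_left power_mult_distrib)
  also have "\<dots> = (C * norm (a - t *\<^sub>R S a))^2"
    unfolding e2 using spec_norm2[OF B, of "\<lambda>b. inner a b * (1 - t * l b)"] by (simp add: power_mult_distrib)
  finally show ?thesis using C by (simp add: power2_le_iff_abs_le)
qed

lemma chart_at:
  assumes "C2_submanifold M" "p \<in> M"
  shows "\<exists>r. graph_chart M p (tangent_space M p) r (SOME g. \<exists>r. graph_chart M p (tangent_space M p) r g)"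
proof -
  from assms have "\<exists>T r g. graph_chart M p T r g" by (auto simp: C2_submanifold_def)
  then have "\<exists>r g. graph_chart M p (tangent_space M p) r g" unfolding tangent_space_def by (rule someI_ex[of "\<lambda>T. \<exists>r g. graph_chart M p T r g"])
  then have "\<exists>g r. graph_chart M p (tangent_space M p) r g" by blast
  then show ?thesis by (rule someI_ex[of "\<lambda>g. \<exists>r. graph_chart M p (tangent_space M p) r g"])
qed

lemma chart_props0:
  assumes "graph_chart M p T r g"
  obtains Dg D2g W where "subspace T" "r > 0" "g 0 = 0" "\<forall>v\<in>T \<inter> ball 0 r. g v \<in> orth_compl T"
    "\<forall>y\<in>ball 0 r. (g has_derivative blinfun_apply (Dg y)) (at y) \<and> (Dg has_derivative blinfun_apply (D2g y)) (at y)"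
    "continuous_on (ball 0 r) D2g" "Dg 0 = 0" "open W" "p \<in> W" "M \<inter> W = (\<lambda>v. p + v + g v) ` (T \<inter> ball 0 r)"
  using assms unfolding graph_chart_def by (elim conjE exE) (rule that; assumption)

lemma chart_props:
  assumes "graph_chart M p T r g"
  obtains Dg D2g W where "subspace T" "r > 0" "g 0 = 0" "\<And>v. v \<in> T \<Longrightarrow> v \<in> ball 0 r \<Longrightarrow> g v \<in> orth_compl T"
    "\<And>y. y \<in> ball 0 r \<Longrightarrow> (g has_derivative blinfun_apply (Dg y)) (at y)"
    "\<And>y. y \<in> ball 0 r \<Longrightarrow> (Dg has_derivative blinfun_apply (D2g y)) (at y)"
    "Dg 0 = 0" "open W" "p \<in> W" "M \<inter> W = (\<lambda>v. p + v + g v) ` (T \<inter> ball 0 r)"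
proof -
  obtain Dg D2g W where h: "subspace T" "r > 0" "g 0 = 0" "\<forall>v\<in>T \<inter> ball 0 r. g v \<in> orth_compl T"
    "\<forall>y\<in>ball 0 r. (g has_derivative blinfun_apply (Dg y)) (at y) \<and> (Dg has_derivative blinfun_apply (D2g y)) (at y)"
    "continuous_on (ball 0 r) D2g" "Dg 0 = 0" "open W" "p \<in> W" "M \<inter> W = (\<lambda>v. p + v + g v) ` (T \<inter> ball 0 r)"
    by (rule chart_props0[OF assms])
  show ?thesis
  proof (rule that[of Dg D2g W])
    show "\<And>v. v \<in> T \<Longrightarrow> v \<in> ball 0 r \<Longrightarrow> g v \<in> orth_compl T" using h(4) by simp
    show "\<And>y. y \<in> ball 0 r \<Longrightarrow> (g has_derivative blinfun_apply (Dg y)) (at y)" using h(5) by simp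
    show "\<And>y. y \<in> ball 0 r \<Longrightarrow> (Dg has_derivative blinfun_apply (D2g y)) (at y)" using h(5) by simp
  qed (fact h)+
qed

lemma chart_inM:
  assumes "graph_chart M p T r g" "v \<in> T" "v \<in> ball 0 r"
  shows "p + v + g v \<in> M"
proof -
  obtain Dg D2g W where "M \<inter> W = (\<lambda>v. p + v + g v) ` (T \<inter> ball 0 r)"
    by (rule chart_props0[OF assms(1)])
  then show ?thesis using assms(2,3) by blast
qed

lemma nearest_normal:
  assumes M: "C2_submanifold M" and q: "q \<in> M" and near: "\<And>q'. q' \<in> M \<Longrightarrow> dist y q \<le> dist y q'"
  shows "y - q \<in> normal_space M q"
proof -
  let ?T = "tangent_space M q"
  obtain r g where ch: "graph_chart M q ?T r g" using chart_at[OF M q] by blast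
  obtain Dg D2g W where T: "subspace ?T" and r: "r > 0" and g0: "g 0 = 0"
    and h4: "\<forall>v\<in>?T \<inter> ball 0 r. g v \<in> orth_compl ?T"
    and h5: "\<forall>y\<in>ball 0 r. (g has_derivative blinfun_apply (Dg y)) (at y) \<and> (Dg has_derivative blinfun_apply (D2g y)) (at y)"
    and "continuous_on (ball 0 r) D2g" and Dg0: "Dg 0 = 0"
    by (rule chart_props0[OF ch])
  have dg: "\<And>y. y \<in> ball 0 r \<Longrightarrow> (g has_derivative blinfun_apply (Dg y)) (at y)" using h5 by simp
  have "inner (y - (q + 0 + g 0)) (w + blinfun_apply (Dg 0) w) = 0" if w: "w \<in> ?T" for w
    by (rule first_order[OF T chart_inM[OF ch] _ _ dg]) (use T r w near g0 in \<open>auto simp: subspace_0\<close>)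
  then show ?thesis using g0 Dg0 by (simp add: normal_space_def orth_compl_def)
qed

lemma tube_proj:
  assumes M: "C2_submanifold M" and cM: "compact M" and nd: "normal_diffeo M \<tau>"
    and p: "p \<in> M" and v: "v \<in> normal_space M p" "norm v < \<tau>"
  shows "proj M (p + v) = p" "\<And>q. q \<in> M \<Longrightarrow> dist (p + v) p \<le> dist (p + v) q"
proof -
  let ?y = "p + v"
  have inj: "inj_on (\<lambda>(p, v). p + v) (normal_bundle_lt M \<tau>)" using nd unfolding normal_diffeo_def by (rule conjunct1)
  have uniq: "q = p" if q: "q \<in> M" "\<And>q'. q' \<in> M \<Longrightarrow> dist ?y q \<le> dist ?y q'" for q
  proof -
    have "?y - q \<in> normal_space M q" by (rule nearest_normal[OF M q])
    moreover have "norm (?y - q) < \<tau>" using q(2)[OF p] v by (simp add: dist_norm)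
    ultimately have "(q, ?y - q) \<in> normal_bundle_lt M \<tau>" using q by (simp add: normal_bundle_lt_def)
    moreover have "(p, v) \<in> normal_bundle_lt M \<tau>" using p v by (simp add: normal_bundle_lt_def)
    moreover have e: "q + (?y - q) = ?y" by (metis add.commute diff_add_cancel)
    then have "(\<lambda>(p, v). p + v) (q, ?y - q) = (\<lambda>(p, v). p + v) (p, v)"
      unfolding case_prod_conv .
    ultimately have "(q, ?y - q) = (p, v)" using inj_onD[OF inj] by blast
    then show "q = p" by (rule prod.inject[THEN iffD1, THEN conjunct1])
  qed
  obtain q where q: "q \<in> M" "\<And>q'. q' \<in> M \<Longrightarrow> dist ?y q \<le> dist ?y q'"
    using distance_attains_inf[of M ?y] compact_imp_closed[OF cM] p by blast
  with uniq have "q = p" by blast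
  with q show near: "\<And>q'. q' \<in> M \<Longrightarrow> dist ?y p \<le> dist ?y q'" by blast
  show "proj M ?y = p" unfolding proj_def
  proof (rule the_equality)
    show "p \<in> M \<and> (\<forall>q\<in>M. dist ?y p \<le> dist ?y q)" using p near by blast
    fix q assume "q \<in> M \<and> (\<forall>q'\<in>M. dist ?y q \<le> dist ?y q')"
    then show "q = p" using uniq by blast
  qed
qed

lemma tube_proj':
  assumes M: "C2_submanifold M" and cM: "compact M" and nd: "normal_diffeo M \<tau>"
    and y: "y \<in> tube M \<tau>"
  shows "proj M y \<in> M" "\<And>q. q \<in> M \<Longrightarrow> dist y (proj M y) \<le> dist y q"
proof -
  obtain p v where pv: "y = p + v" "p \<in> M" "v \<in> normal_space M p" "norm v < \<tau>"
    using y by (auto simp: tube_def)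
  show "proj M y \<in> M" "\<And>q. q \<in> M \<Longrightarrow> dist y (proj M y) \<le> dist y q"
    using tube_proj[OF M cM nd pv(2-4)] pv(1,2) by auto
qed

lemma normal_diffeo_0: "normal_diffeo M 0"
proof -
  have e1: "normal_bundle_lt M 0 = {}" by (auto simp: normal_bundle_lt_def)
  have e2: "tube M 0 = {}" by (auto simp: tube_def)
  show ?thesis unfolding normal_diffeo_def e1 e2
    by (intro conjI exI[of _ "\<lambda>x. (0, 0)"] exI[of _ "\<lambda>x. 0"]) auto
qed

lemma reach_ex:
  assumes "s < reach M"
  shows "\<exists>\<tau>>s. normal_diffeo M \<tau>"
proof -
  define X where "X = {\<tau>. \<tau> \<ge> 0 \<and> normal_diffeo M \<tau>}"
  have X0: "X \<noteq> {}" using normal_diffeo_0[of M] by (auto simp: X_def)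
  show ?thesis
  proof (cases "bdd_above X")
    case True
    then have "\<exists>x\<in>X. s < x" using less_cSup_iff[OF X0 True] assms by (simp add: reach_def X_def)
    then show ?thesis by (auto simp: X_def)
  next
    case False
    then have "\<exists>x\<in>X. s < x" unfolding bdd_above_def by (meson not_le)
    then show ?thesis by (auto simp: X_def)
  qed
qed

lemma proj_deriv:
  assumes M: "C2_submanifold M" and cM: "compact M" and nd: "normal_diffeo M \<tau>"
    and y: "y \<in> tube M \<tau>"
  shows "\<exists>D. (proj M has_derivative D) (at y)"
proof -
  obtain G :: "'a \<Rightarrow> 'a \<times> 'a" and G' where G: "\<forall>(p, v)\<in>normal_bundle_lt M \<tau>. G (p + v) = (p, v)"
    and dG: "\<forall>x\<in>tube M \<tau>. (G has_derivative blinfun_apply (G' x)) (at x)"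
    and op: "open (tube M \<tau>)"
    using nd unfolding normal_diffeo_def by blast
  have "((\<lambda>z. fst (G z)) has_derivative (\<lambda>h. fst (blinfun_apply (G' y) h))) (at y)"
    using dG y by (auto intro: has_derivative_fst)
  moreover have "fst (G z) = proj M z" if z: "z \<in> tube M \<tau>" for z
  proof -
    obtain p v where pv: "z = p + v" "p \<in> M" "v \<in> normal_space M p" "norm v < \<tau>"
      using z by (auto simp: tube_def)
    then have "G z = (p, v)" using G by (auto simp: normal_bundle_lt_def)
    then show ?thesis using tube_proj(1)[OF M cM nd pv(2-4)] pv(1) by simp
  qed
  ultimately have "(proj M has_derivative (\<lambda>h. fst (blinfun_apply (G' y) h))) (at y)"
    by (rule has_derivative_transform_within_open[OF _ op y])
  then show ?thesis by blast
qed

lemma proj_cont: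
  assumes M: "C2_submanifold M" and cM: "compact M" and nd: "normal_diffeo M \<tau>"
  shows "continuous_on (tube M \<tau>) (proj M)"
proof (intro continuous_at_imp_continuous_on ballI)
  fix y assume "y \<in> tube M \<tau>"
  then obtain D where "(proj M has_derivative D) (at y)" using proj_deriv[OF M cM nd] by blast
  then show "isCont (proj M) y" by (rule has_derivative_continuous)
qed

lemma P0_eq:
  assumes "(proj M has_derivative D) (at x)"
  shows "blinfun_apply (P0 M x) = D"
proof -
  have bl: "bounded_linear D" using assms by (rule has_derivative_bounded_linear)
  have "P0 M x = Blinfun D" unfolding P0_def
  proof (rule the_equality)
    show "(proj M has_derivative blinfun_apply (Blinfun D)) (at x)"
      using assms bl by (simp add: bounded_linear_Blinfun_apply)
    fix L assume "(proj M has_derivative blinfun_apply L) (at x)"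
    then have "blinfun_apply L = D" using assms by (rule has_derivative_unique)
    then show "L = Blinfun D" using bl by (metis blinfun_apply_inverse)
  qed
  then show ?thesis using bl by (simp add: bounded_linear_Blinfun_apply)
qed

lemma sff_chart:
  assumes M: "C2_submanifold M" and p: "p \<in> M"
  obtains r g Dg D2g W where "graph_chart M p (tangent_space M p) r g"
    "subspace (tangent_space M p)" "r > 0" "g 0 = 0"
    "\<And>v. v \<in> tangent_space M p \<Longrightarrow> v \<in> ball 0 r \<Longrightarrow> g v \<in> orth_compl (tangent_space M p)"
    "\<And>y. y \<in> ball 0 r \<Longrightarrow> (g has_derivative blinfun_apply (Dg y)) (at y)"
    "\<And>y. y \<in> ball 0 r \<Longrightarrow> (Dg has_derivative blinfun_apply (D2g y)) (at y)"
    "Dg 0 = 0" "open W" "p \<in> W" "M \<inter> W = (\<lambda>v. p + v + g v) ` (tangent_space M p \<inter> ball 0 r)"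
    "\<And>a w. sff M p a w = blinfun_apply (blinfun_apply (D2g 0) a) w"
    "\<And>a w. blinfun_apply (blinfun_apply (D2g 0) a) w = blinfun_apply (blinfun_apply (D2g 0) w) a"
proof -
  let ?T = "tangent_space M p"
  define g0 where "g0 = (SOME g. \<exists>r. graph_chart M p ?T r g)"
  obtain r where ch: "graph_chart M p ?T r g0" using chart_at[OF M p] unfolding g0_def by blast
  obtain Dg D2g W where h: "subspace ?T" "r > 0" "g0 0 = 0" "\<forall>v\<in>?T \<inter> ball 0 r. g0 v \<in> orth_compl ?T"
    "\<forall>y\<in>ball 0 r. (g0 has_derivative blinfun_apply (Dg y)) (at y) \<and> (Dg has_derivative blinfun_apply (D2g y)) (at y)"
    "continuous_on (ball 0 r) D2g" "Dg 0 = 0" "open W" "p \<in> W" "M \<inter> W = (\<lambda>v. p + v + g0 v) ` (?T \<inter> ball 0 r)"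
    by (rule chart_props0[OF ch])
  have dg: "\<And>y. y \<in> ball 0 r \<Longrightarrow> (g0 has_derivative blinfun_apply (Dg y)) (at y)" using h(5) by simp
  have d2g: "\<And>y. y \<in> ball 0 r \<Longrightarrow> (Dg has_derivative blinfun_apply (D2g y)) (at y)" using h(5) by simp
  have b0: "0 \<in> ball 0 r" using h(2) by simp
  have sffeq: "sff M p a w = blinfun_apply (blinfun_apply (D2g 0) a) w" for a w
  proof -
    have fd: "frechet_derivative g0 (at y) = blinfun_apply (Dg y)" if "y \<in> ball 0 r" for y
      using frechet_derivative_at[OF dg[OF that]] by simp
    have "((\<lambda>y. blinfun_apply (Dg y) w) has_derivative (\<lambda>a. blinfun_apply (blinfun_apply (D2g 0) a) w)) (at 0)"
      by (rule bounded_linear.has_derivative[OF blinfun.bounded_linear_left d2g[OF b0]])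
    then have "((\<lambda>y. frechet_derivative g0 (at y) w) has_derivative (\<lambda>a. blinfun_apply (blinfun_apply (D2g 0) a) w)) (at 0)"
      by (rule has_derivative_transform_within_open[OF _ open_ball b0]) (simp add: fd)
    then have "frechet_derivative (\<lambda>y. frechet_derivative g0 (at y) w) (at 0) = (\<lambda>a. blinfun_apply (blinfun_apply (D2g 0) a) w)"
      by (rule frechet_derivative_at[symmetric])
    then show ?thesis by (simp add: sff_def Let_def g0_def[symmetric])
  qed
  have sym: "blinfun_apply (blinfun_apply (D2g 0) a) w = blinfun_apply (blinfun_apply (D2g 0) w) a" for a w
    by (rule schwarz_at[OF h(2) dg d2g[OF b0]])
  show ?thesis
  proof (rule that[of r g0 Dg D2g W, OF ch h(1-3) _ dg d2g h(7-10) sffeq sym])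
    show "\<And>v. v \<in> ?T \<Longrightarrow> v \<in> ball 0 r \<Longrightarrow> g0 v \<in> orth_compl ?T" using h(4) by simp
  qed
qed

lemma sff_bilin:
  assumes M: "C2_submanifold M" and p: "p \<in> M"
  shows "\<exists>L. (\<forall>a w. sff M p a w = blinfun_apply (blinfun_apply L a) w) \<and>
              (\<forall>a w. blinfun_apply (blinfun_apply L a) w = blinfun_apply (blinfun_apply L w) a)"
proof -
  obtain r g Dg D2g W where
    "\<And>a w. sff M p a w = blinfun_apply (blinfun_apply (D2g 0) a) w"
    "\<And>a w. blinfun_apply (blinfun_apply (D2g 0) a) w = blinfun_apply (blinfun_apply (D2g 0) w) a"
    by (rule sff_chart[OF M p], rule that)
  then show ?thesis by blast
qed

lemma tangent_subspace:
  assumes M: "C2_submanifold M" and p: "p \<in> M"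
  shows "subspace (tangent_space M p)"
proof -
  obtain r g Dg D2g W where "subspace (tangent_space M p)" by (rule sff_chart[OF M p], rule that)
  then show ?thesis .
qed

lemma weingarten_ex:
  assumes M: "C2_submanifold M" and p: "p \<in> M"
  shows "\<exists>s. s \<in> tangent_space M p \<and> (\<forall>w\<in>tangent_space M p. inner w s = inner (sff M p a w) u)"
proof -
  let ?T = "tangent_space M p"
  have T: "subspace ?T" by (rule tangent_subspace[OF M p])
  obtain L where L: "\<And>a w. sff M p a w = blinfun_apply (blinfun_apply L a) w" using sff_bilin[OF M p] by blast
  define Lf where "Lf x = inner (blinfun_apply (blinfun_apply L a) (oproj ?T x)) u" for x
  have linLf: "linear Lf"
  proof -
    have "linear (\<lambda>x. inner (blinfun_apply (blinfun_apply L a) x) u)"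
      by (intro bounded_linear.linear bounded_linear_compose[OF bounded_linear_inner_left] blinfun.bounded_linear_right)
    then show ?thesis unfolding Lf_def
      using linear_compose[OF oproj_linear[OF T]] by (simp add: o_def)
  qed
  define z where "z = (\<Sum>b\<in>Basis. Lf b *\<^sub>R b)"
  have "oproj ?T z \<in> ?T" by (rule oproj(1)[OF T])
  moreover have "inner w (oproj ?T z) = inner (sff M p a w) u" if w: "w \<in> ?T" for w
  proof -
    have "inner w (oproj ?T z) = inner z w" using oproj_inner[OF T w] by (simp add: inner_commute)
    also have "\<dots> = (\<Sum>b\<in>Basis. Lf b * inner b w)" by (simp add: z_def inner_sum_left)
    also have "\<dots> = Lf (\<Sum>b\<in>Basis. inner w b *\<^sub>R b)"
      by (simp add: linear_sum[OF linLf] linear_scale[OF linLf] inner_commute mult.commute)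
    also have "\<dots> = Lf w" by (simp add: euclidean_representation)
    also have "\<dots> = inner (sff M p a w) u" by (simp add: Lf_def oproj_id[OF T w] L)
    finally show ?thesis .
  qed
  ultimately show ?thesis by blast
qed

lemma weingarten_char:
  assumes M: "C2_submanifold M" and p: "p \<in> M"
  shows "weingarten M p u a \<in> tangent_space M p"
    "\<And>w. w \<in> tangent_space M p \<Longrightarrow> inner w (weingarten M p u a) = inner (sff M p a w) u"
  using someI_ex[OF weingarten_ex[OF M p, of a u]] unfolding weingarten_def by blast+

lemma weingarten_unique:
  assumes M: "C2_submanifold M" and p: "p \<in> M"
    and y: "y \<in> tangent_space M p" "\<And>w. w \<in> tangent_space M p \<Longrightarrow> inner w y = inner (sff M p a w) u"
  shows "weingarten M p u a = y"
proof -
  have T: "subspace (tangent_space M p)" by (rule tangent_subspace[OF M p])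
  have "weingarten M p u a - y = 0"
  proof (rule sub_orth_zero[OF T])
    show "weingarten M p u a - y \<in> tangent_space M p"
      using weingarten_char(1)[OF M p] y(1) T by (simp add: subspace_diff)
    fix w assume w: "w \<in> tangent_space M p"
    have "inner w (weingarten M p u a - y) = 0"
      using weingarten_char(2)[OF M p w] y(2)[OF w] by (simp add: inner_diff_right)
    then show "inner (weingarten M p u a - y) w = 0" by (simp add: inner_commute)
  qed
  then show ?thesis by simp
qed

lemma weingarten_linear:
  assumes M: "C2_submanifold M" and p: "p \<in> M"
  shows "linear (weingarten M p u)"
proof -
  have T: "subspace (tangent_space M p)" by (rule tangent_subspace[OF M p])
  obtain L where L: "\<And>a w. sff M p a w = blinfun_apply (blinfun_apply L a) w" using sff_bilin[OF M p] by blast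
  show ?thesis
  proof (rule linearI)
    fix a b
    show "weingarten M p u (a + b) = weingarten M p u a + weingarten M p u b"
      by (rule weingarten_unique[OF M p])
        (auto simp: T subspace_add weingarten_char[OF M p] inner_add_right L blinfun.add_left blinfun.add_right inner_add_left)
  next
    fix c :: real and a
    show "weingarten M p u (c *\<^sub>R a) = c *\<^sub>R weingarten M p u a"
      by (rule weingarten_unique[OF M p])
        (auto simp: T subspace_scale weingarten_char[OF M p] L blinfun.scaleR_left blinfun.scaleR_right
           blinfun.bilinear_simps)
  qed
qed

lemma weingarten_selfadj:
  assumes M: "C2_submanifold M" and p: "p \<in> M"
    and a: "a \<in> tangent_space M p" and b: "b \<in> tangent_space M p"
  shows "inner b (weingarten M p u a) = inner a (weingarten M p u b)"
proof -
  obtain L where L: "\<And>a w. sff M p a w = blinfun_apply (blinfun_apply L a) w"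
    and S: "\<And>a w. blinfun_apply (blinfun_apply L a) w = blinfun_apply (blinfun_apply L w) a"
    using sff_bilin[OF M p] by blast
  show ?thesis using weingarten_char(2)[OF M p a] weingarten_char(2)[OF M p b] by (simp add: L S)
qed

lemma weingarten_neg:
  assumes M: "C2_submanifold M" and p: "p \<in> M"
  shows "weingarten M p (- u) a = - weingarten M p u a"
proof -
  have T: "subspace (tangent_space M p)" by (rule tangent_subspace[OF M p])
  show ?thesis
    by (rule weingarten_unique[OF M p]) (auto simp: T subspace_neg weingarten_char[OF M p])
qed

lemma weingarten_spec:
  assumes M: "C2_submanifold M" and p: "p \<in> M"
  shows "\<exists>B. spec_basis (tangent_space M p) (weingarten M p u) B"
  by (rule spectral[OF tangent_subspace[OF M p] weingarten_linear[OF M p] weingarten_char(1)[OF M p]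
        weingarten_selfadj[OF M p]])

lemma deriv_formula:
  assumes M: "C2_submanifold M" and cM: "compact M" and nd: "normal_diffeo M \<tau>"
    and p: "p \<in> M" and v: "v \<in> normal_space M p" "norm v < \<tau>"
    and D: "(proj M has_derivative D) (at (p + v))"
  shows "D h \<in> tangent_space M p \<and>
     (\<forall>w\<in>tangent_space M p. inner (h - D h) w + inner v (sff M p (D h) w) = 0)"
proof -
  let ?T = "tangent_space M p"
  define x where "x = p + v"
  obtain r g Dg D2g W where ch: "graph_chart M p ?T r g"
    and T: "subspace ?T" and r: "r > 0" and g0: "g 0 = 0"
    and gorth: "\<And>v. v \<in> ?T \<Longrightarrow> v \<in> ball 0 r \<Longrightarrow> g v \<in> orth_compl ?T"
    and dg: "\<And>y. y \<in> ball 0 r \<Longrightarrow> (g has_derivative blinfun_apply (Dg y)) (at y)"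
    and d2g: "\<And>y. y \<in> ball 0 r \<Longrightarrow> (Dg has_derivative blinfun_apply (D2g y)) (at y)"
    and Dg0: "Dg 0 = 0" and W: "open W" "p \<in> W" and MW: "M \<inter> W = (\<lambda>v. p + v + g v) ` (?T \<inter> ball 0 r)"
    and sffeq: "\<And>a w. sff M p a w = blinfun_apply (blinfun_apply (D2g 0) a) w"
    by (rule sff_chart[OF M p], rule that)
  have b0: "0 \<in> ball 0 r" using r by simp
  have px: "proj M x = p" using tube_proj(1)[OF M cM nd p v] by (simp add: x_def)
  have xt: "x \<in> tube M \<tau>" using p v by (auto simp: x_def tube_def)
  have opt: "open (tube M \<tau>)" using nd by (simp add: normal_diffeo_def)
  define U where "U = proj M -` W \<inter> tube M \<tau>"
  have oU: "open U"
    using continuous_on_open_vimage[OF opt, THEN iffD1, OF proj_cont[OF M cM nd]] W(1) by (simp add: U_def)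
  have xU: "x \<in> U" using xt px W(2) by (simp add: U_def)
  define V where "V y = oproj ?T (proj M y - p)" for y
  have Vrep: "V y \<in> ?T \<and> V y \<in> ball 0 r \<and> proj M y = p + V y + g (V y)" if y: "y \<in> U" for y
  proof -
    have "proj M y \<in> M" using tube_proj'(1)[OF M cM nd] y by (simp add: U_def)
    moreover have "proj M y \<in> W" using y by (simp add: U_def)
    ultimately have "proj M y \<in> (\<lambda>v. p + v + g v) ` (?T \<inter> ball 0 r)" using MW by blast
    then obtain v' where v': "v' \<in> ?T" "v' \<in> ball 0 r" "proj M y = p + v' + g v'" by blast
    have "V y = oproj ?T v' + oproj ?T (g v')"
      using v'(3) by (simp add: V_def linear_add[OF oproj_linear[OF T], symmetric] add.assoc)
    also have "\<dots> = v'" using oproj_id[OF T v'(1)] oproj_orth_compl[OF T gorth[OF v'(1,2)]] by simp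
    finally show ?thesis using v' by simp
  qed
  have V0: "V x = 0" using px linear_0[OF oproj_linear[OF T]] by (simp add: V_def)
  have "((\<lambda>y. proj M y - p) has_derivative (\<lambda>h. D h)) (at x)"
    using has_derivative_diff[OF D has_derivative_const[of p]] by (simp add: x_def)
  then have dV: "(V has_derivative (\<lambda>h. oproj ?T (D h))) (at x)"
    unfolding V_def by (rule bounded_linear.has_derivative[OF oproj_bounded_linear[OF T]])
  have dgV: "(g has_derivative blinfun_apply (Dg (V x))) (at (V x))" using dg[OF b0] V0 by simp
  have d2gV: "(Dg has_derivative blinfun_apply (D2g (V x))) (at (V x))" using d2g[OF b0] V0 by simp
  have "((\<lambda>y. p + V y + g (V y)) has_derivative (\<lambda>h. 0 + oproj ?T (D h) + blinfun_apply (Dg (V x)) (oproj ?T (D h)))) (at x)"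
    by (intro has_derivative_add has_derivative_const dV has_derivative_compose[OF dV dgV])
  then have "((\<lambda>y. p + V y + g (V y)) has_derivative (\<lambda>h. oproj ?T (D h))) (at x)"
    using V0 Dg0 by simp
  then have "(proj M has_derivative (\<lambda>h. oproj ?T (D h))) (at x)"
    by (rule has_derivative_transform_within_open[OF _ oU xU]) (simp add: Vrep)
  then have DD: "D = (\<lambda>h. oproj ?T (D h))" using D unfolding x_def[symmetric] by (rule has_derivative_unique[rotated])
  have DhT: "D k \<in> ?T" for k by (subst DD) (rule oproj(1)[OF T])
  \<comment> \<open>Step 2: differentiate the first-order condition\<close>
  have "inner (h - D h) w + inner v (sff M p (D h) w) = 0" if w: "w \<in> ?T" for w
  proof -
    define \<Phi> where "\<Phi> y = inner (y - proj M y) (w + blinfun_apply (Dg (V y)) w)" for y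
    have \<Phi>0: "\<Phi> y = 0" if y: "y \<in> U" for y
    proof -
      have yt: "y \<in> tube M \<tau>" using y by (simp add: U_def)
      have near: "\<And>q'. q' \<in> M \<Longrightarrow> dist y (p + V y + g (V y)) \<le> dist y q'"
        using tube_proj'(2)[OF M cM nd yt] Vrep[OF y] by simp
      have "inner (y - (p + V y + g (V y))) (w + blinfun_apply (Dg (V y)) w) = 0"
        using Vrep[OF y] by (intro first_order[OF T chart_inM[OF ch] _ _ dg near w]) auto
      then show ?thesis using Vrep[OF y] by (simp add: \<Phi>_def)
    qed
    have d1: "((\<lambda>y. y - proj M y) has_derivative (\<lambda>h. h - D h)) (at x)"
      using has_derivative_diff[OF has_derivative_ident D[folded x_def]] .
    have d2: "((\<lambda>y. Dg (V y)) has_derivative (\<lambda>h. blinfun_apply (D2g (V x)) (oproj ?T (D h)))) (at x)"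
      by (rule has_derivative_compose[OF dV d2gV])
    have d3: "((\<lambda>y. blinfun_apply (Dg (V y)) w) has_derivative (\<lambda>h. blinfun_apply (blinfun_apply (D2g (V x)) (oproj ?T (D h))) w)) (at x)"
      by (rule bounded_linear.has_derivative[OF blinfun.bounded_linear_left d2])
    have d4: "((\<lambda>y. w + blinfun_apply (Dg (V y)) w) has_derivative (\<lambda>h. 0 + blinfun_apply (blinfun_apply (D2g (V x)) (oproj ?T (D h))) w)) (at x)"
      by (rule has_derivative_add[OF has_derivative_const d3])
    have dP: "(\<Phi> has_derivative (\<lambda>k. inner (x - proj M x) (0 + blinfun_apply (blinfun_apply (D2g (V x)) (oproj ?T (D k))) w)
        + inner (k - D k) (w + blinfun_apply (Dg (V x)) w))) (at x)"
      unfolding \<Phi>_def by (rule has_derivative_inner[OF d1 d4])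
    have "(\<Phi> has_derivative (\<lambda>k. 0)) (at x)"
      by (rule has_derivative_transform_within_open[OF has_derivative_const oU xU]) (simp add: \<Phi>0)
    then have "(\<lambda>k. inner (x - proj M x) (0 + blinfun_apply (blinfun_apply (D2g (V x)) (oproj ?T (D k))) w)
        + inner (k - D k) (w + blinfun_apply (Dg (V x)) w)) = (\<lambda>k. 0)"
      using dP by (rule has_derivative_unique[rotated])
    then have "inner (x - proj M x) (0 + blinfun_apply (blinfun_apply (D2g (V x)) (oproj ?T (D h))) w)
        + inner (h - D h) (w + blinfun_apply (Dg (V x)) w) = 0" by (rule fun_cong)
    moreover have "oproj ?T (D h) = D h" using DD by metis
    ultimately show ?thesis using px V0 Dg0 by (simp add: x_def sffeq add.commute)
  qed
  then show ?thesis using DhT by blast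
qed

lemma normal_scale:
  assumes "u \<in> normal_space M p" shows "c *\<^sub>R u \<in> normal_space M p"
  using assms by (simp add: normal_space_def orth_compl_def)

lemma eig_bound:
  assumes M: "C2_submanifold M" and cM: "compact M" and R: "reach M > 0"
    and p: "p \<in> M" and u: "u \<in> normal_space M p" "norm u = 1"
    and e: "e \<in> tangent_space M p" "e \<noteq> 0" "weingarten M p u e = l *\<^sub>R e"
  shows "l \<le> 1 / reach M"
proof (rule ccontr)
  assume "\<not> l \<le> 1 / reach M"
  then have l: "l > 1 / reach M" by simp
  have l0: "l > 0" using l R by (smt (verit) divide_pos_pos)
  define s where "s = 1 / l"
  have s0: "s > 0" using l0 by (simp add: s_def)
  have sR: "s < reach M" using l R l0 unfolding s_def by (simp add: divide_less_eq field_simps)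
  obtain \<tau> where \<tau>: "\<tau> > s" "normal_diffeo M \<tau>" using reach_ex[OF sR] by blast
  let ?v = "s *\<^sub>R u"
  have v: "?v \<in> normal_space M p" "norm ?v < \<tau>" using normal_scale[OF u(1)] u(2) s0 \<tau> by auto
  have "p + ?v \<in> tube M \<tau>" using p v unfolding tube_def by blast
  then obtain D where D: "(proj M has_derivative D) (at (p + ?v))" using proj_deriv[OF M cM \<tau>(2)] by blast
  from deriv_formula[OF M cM \<tau>(2) p v D, of e]
  have a: "D e \<in> tangent_space M p" and eq: "inner (e - D e) e + inner ?v (sff M p (D e) e) = 0"
    using e(1) by auto
  have "inner ?v (sff M p (D e) e) = s * inner e (weingarten M p u (D e))"
    using weingarten_char(2)[OF M p e(1), of u "D e"] by (simp add: inner_commute)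
  also have "\<dots> = s * inner (D e) (weingarten M p u e)"
    using weingarten_selfadj[OF M p a e(1)] by simp
  also have "\<dots> = inner (D e) e" using e(3) l0 by (simp add: s_def)
  finally have "inner ?v (sff M p (D e) e) = inner (D e) e" .
  with eq have "inner e e - inner (D e) e + inner (D e) e = 0" by (simp add: inner_diff_left)
  then have "inner e e = 0" by simp
  then show False using e(2) by simp
qed

lemma eigs_props:
  assumes M: "C2_submanifold M" and cM: "compact M" and R: "reach M > 0"
    and p: "p \<in> M" and u: "u \<in> normal_space M p" "u \<noteq> 0"
  shows "finite (weingarten_eigs M p (u /\<^sub>R norm u))"
    "\<And>\<mu>. \<mu> \<in> weingarten_eigs M p (u /\<^sub>R norm u) \<Longrightarrow> \<bar>\<mu>\<bar> \<le> 1 / reach M"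
    "kappa_at M p u \<le> 1 / reach M"
proof -
  let ?u = "u /\<^sub>R norm u"
  let ?S = "weingarten M p ?u"
  have un: "?u \<in> normal_space M p" "norm ?u = 1" using normal_scale[OF u(1)] u(2) by auto
  have un': "- ?u \<in> normal_space M p" "norm (- ?u) = 1"
    using normal_scale[OF un(1), of "-1"] un(2) by auto
  obtain B where B: "spec_basis (tangent_space M p) ?S B" using weingarten_spec[OF M p] by blast
  have "weingarten_eigs M p ?u \<subseteq> (\<lambda>b. inner b (?S b)) ` B"
  proof
    fix \<mu> assume "\<mu> \<in> weingarten_eigs M p ?u"
    then obtain a where a: "a \<in> tangent_space M p" "a \<noteq> 0" "?S a = \<mu> *\<^sub>R a"
      by (auto simp: weingarten_eigs_def)
    from spec_eig[OF B weingarten_selfadj[OF M p] a] show "\<mu> \<in> (\<lambda>b. inner b (?S b)) ` B" by auto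
  qed
  moreover have "finite B" using B by (simp add: spec_basis_def)
  ultimately show fin: "finite (weingarten_eigs M p ?u)" by (rule finite_subset[OF _ finite_imageI])
  show bnd: "\<bar>\<mu>\<bar> \<le> 1 / reach M" if mu: "\<mu> \<in> weingarten_eigs M p ?u" for \<mu>
  proof -
    obtain a where a: "a \<in> tangent_space M p" "a \<noteq> 0" "?S a = \<mu> *\<^sub>R a"
      using mu by (auto simp: weingarten_eigs_def)
    have "\<mu> \<le> 1 / reach M" by (rule eig_bound[OF M cM R p un a])
    moreover have "weingarten M p (- ?u) a = (- \<mu>) *\<^sub>R a" using weingarten_neg[OF M p] a(3) by simp
    then have "- \<mu> \<le> 1 / reach M" by (rule eig_bound[OF M cM R p un' a(1,2)])
    ultimately show ?thesis by linarith
  qed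
  show "kappa_at M p u \<le> 1 / reach M"
    unfolding kappa_at_def using fin bnd R by (subst Max_le_iff) auto
qed

theorem lemma3:
  fixes M :: "'a::euclidean_space set" and x :: 'a
  assumes "C2_submanifold M" and "compact M" and "reach M > 0"
    and "x \<in> tube M (reach M)"
  shows "norm (P0 M (proj M x) - P0 M x)
           \<le> kappa_at M (proj M x) (x - proj M x)
              * inverse (1 - norm (proj M x - x) * inv_rho M (proj M x) (x - proj M x))
              * norm (x - proj M x)
      \<and> kappa_at M (proj M x) (x - proj M x)
              * inverse (1 - norm (proj M x - x) * inv_rho M (proj M x) (x - proj M x))
              * norm (x - proj M x)
           \<le> norm (x - proj M x) * kappa M / (1 - norm (x - proj M x) * kappa M)
      \<and> norm (x - proj M x) * kappa M / (1 - norm (x - proj M x) * kappa M)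
           \<le> (norm (x - proj M x) / reach M) / (1 - norm (x - proj M x) / reach M)"
proof -
  note M = assms(1) and cM = assms(2) and R = assms(3)
  obtain p v where x: "x = p + v" and p: "p \<in> M" and v: "v \<in> normal_space M p" "norm v < reach M"
    using assms(4) by (auto simp: tube_def)
  obtain \<tau> where \<tau>: "\<tau> > norm v" "normal_diffeo M \<tau>" using reach_ex[OF v(2)] by blast
  have px: "proj M x = p" using tube_proj(1)[OF M cM \<tau>(2) p v(1) \<tau>(1)] by (simp add: x)
  have e1: "x - proj M x = v" "norm (proj M x - x) = norm v" using px by (auto simp: x norm_minus_commute)
  define t where "t = norm v"
  define \<kappa>p where "\<kappa>p = kappa_at M p v"
  define \<rho> where "\<rho> = inv_rho M p v"
  define \<kappa> where "\<kappa> = kappa M"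
  define Rr where "Rr = reach M"
  have goal: "norm (P0 M p - P0 M x) \<le> \<kappa>p * inverse (1 - t * \<rho>) * t
      \<and> \<kappa>p * inverse (1 - t * \<rho>) * t \<le> t * \<kappa> / (1 - t * \<kappa>)
      \<and> t * \<kappa> / (1 - t * \<kappa>) \<le> (t / Rr) / (1 - t / Rr)"
  proof (cases "v = 0")
    case True
    then show ?thesis by (simp add: t_def x)
  next
    case False
    let ?T = "tangent_space M p"
    let ?u = "v /\<^sub>R norm v"
    let ?S = "weingarten M p ?u"
    have t0: "t > 0" using False by (simp add: t_def)
    have tR: "t < Rr" using v(2) by (simp add: t_def Rr_def)
    have R0: "Rr > 0" using R by (simp add: Rr_def)
    have T: "subspace ?T" by (rule tangent_subspace[OF M p])
    have fin: "finite (weingarten_eigs M p ?u)" by (rule eigs_props(1)[OF M cM R p v(1) False])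
    have kpR: "\<kappa>p \<le> 1 / Rr" using eigs_props(3)[OF M cM R p v(1) False] by (simp add: \<kappa>p_def Rr_def)
    have kp0: "0 \<le> \<kappa>p" unfolding \<kappa>p_def kappa_at_def using fin by (intro Max_ge) auto
    have rho0: "0 \<le> \<rho>" unfolding \<rho>_def inv_rho_def using fin by (intro Max_ge) auto
    have rhokp: "\<rho> \<le> \<kappa>p"
    proof -
      let ?E = "weingarten_eigs M p ?u"
      have f2: "finite (abs ` ?E \<union> {0})" using fin by simp
      have "a \<le> Max (abs ` ?E \<union> {0})" if a: "a \<in> ?E \<union> {0}" for a
      proof -
        have "\<bar>a\<bar> \<in> abs ` ?E \<union> {0}" using a by auto
        with f2 have "\<bar>a\<bar> \<le> Max (abs ` ?E \<union> {0})" by (rule Max_ge)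
        then show ?thesis by linarith
      qed
      then show ?thesis unfolding \<rho>_def \<kappa>p_def inv_rho_def kappa_at_def using fin
        by (subst Max_le_iff) auto
    qed
    define K where "K = {kappa_at M p u | p u. p \<in> M \<and> u \<in> normal_space M p \<and> u \<noteq> 0}"
    have Kb: "k \<le> 1 / Rr" if k: "k \<in> K" for k
    proof -
      from k obtain q u where qu: "k = kappa_at M q u" "q \<in> M" "u \<in> normal_space M q" "u \<noteq> 0"
        unfolding K_def by blast
      show ?thesis using eigs_props(3)[OF M cM R qu(2-4)] qu(1) by (simp add: Rr_def)
    qed
    have kpK: "\<kappa>p \<in> K" using p v False unfolding K_def \<kappa>p_def by blast
    have kpk: "\<kappa>p \<le> \<kappa>" unfolding \<kappa>_def kappa_def K_def[symmetric]
      by (rule cSup_upper[OF kpK]) (use Kb in \<open>auto simp: bdd_above_def\<close>)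
    have kR: "\<kappa> \<le> 1 / Rr" unfolding \<kappa>_def kappa_def K_def[symmetric]
      by (rule cSup_least) (use kpK Kb in auto)
    have tk1: "t * \<kappa> \<le> t / Rr" using kR t0 by (simp add: mult_left_mono divide_inverse)
    have tR1: "t / Rr < 1" using tR R0 by simp
    have trho: "t * \<rho> \<le> t * \<kappa>" using rhokp kpk t0 by simp
    have "x \<in> tube M \<tau>" using p v \<tau> unfolding tube_def x by blast
    then obtain D where D: "(proj M has_derivative D) (at x)" using proj_deriv[OF M cM \<tau>(2)] by blast
    have tau0: "0 < \<tau>" using \<tau>(1) norm_ge_zero[of v] by linarith
    have z0: "0 \<in> normal_space M p" "norm 0 < \<tau>" using tau0 by (auto simp: normal_space_def orth_compl_def)
    have "p + 0 \<in> tube M \<tau>" using p z0 unfolding tube_def by blast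
    then have "p \<in> tube M \<tau>" by simp
    then obtain D0 where D0: "(proj M has_derivative D0) (at p)" using proj_deriv[OF M cM \<tau>(2)] by blast
    have PD: "blinfun_apply (P0 M x) = D" by (rule P0_eq[OF D])
    have PD0: "blinfun_apply (P0 M p) = D0" by (rule P0_eq[OF D0])
    have D0h: "D0 h = oproj ?T h" for h
    proof -
      from deriv_formula[OF M cM \<tau>(2) p z0, of D0 h] D0
      have "D0 h \<in> ?T" "\<And>w. w \<in> ?T \<Longrightarrow> inner (h - D0 h) w = 0" by auto
      then show ?thesis by (intro oproj_unique[OF T, symmetric]) auto
    qed
    have Dh: "D h \<in> ?T \<and> oproj ?T h = D h - t *\<^sub>R ?S (D h)" for h
    proof -
      from deriv_formula[OF M cM \<tau>(2) p v(1) \<tau>(1), of D h] D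
      have a: "D h \<in> ?T" and eq: "\<And>w. w \<in> ?T \<Longrightarrow> inner (h - D h) w + inner v (sff M p (D h) w) = 0"
        by (auto simp: x)
      have "inner (h - (D h - t *\<^sub>R ?S (D h))) w = 0" if w: "w \<in> ?T" for w
      proof -
        have "inner v (sff M p (D h) w) = t * inner ?u (sff M p (D h) w)"
          using t0 by (simp add: t_def)
        also have "\<dots> = t * inner w (?S (D h))"
          using weingarten_char(2)[OF M p w, of ?u "D h"] by (simp add: inner_commute)
        finally show ?thesis using eq[OF w]
          by (simp add: inner_diff_left inner_add_left inner_commute[of w] algebra_simps)
      qed
      moreover have "D h - t *\<^sub>R ?S (D h) \<in> ?T"
        using a T weingarten_char(1)[OF M p] by (simp add: subspace_diff subspace_scale)
      ultimately show ?thesis using a by (simp add: oproj_unique[OF T])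
    qed
    obtain B where B: "spec_basis ?T ?S B" using weingarten_spec[OF M p] by blast
    define C where "C = \<kappa>p * inverse (1 - t * \<rho>) * t"
    have pos: "1 - t * \<rho> > 0" using trho tk1 tR1 by linarith
    have C0: "C \<ge> 0" using kp0 pos t0 by (simp add: C_def)
    have Cpos: "C * (1 - t * \<rho>) = t * \<kappa>p" using pos by (simp add: C_def field_simps)
    have bnd: "\<bar>t * inner b (?S b)\<bar> \<le> C * \<bar>1 - t * inner b (?S b)\<bar>" if b: "b \<in> B" for b
    proof -
      let ?l = "inner b (?S b)"
      have "b \<in> ?T" "norm b = 1" "?S b = ?l *\<^sub>R b" using B b by (auto simp: spec_basis_def)
      then have "?l \<in> weingarten_eigs M p ?u" by (auto simp: weingarten_eigs_def intro!: bexI[of _ b])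
      then have l1: "\<bar>?l\<bar> \<le> \<kappa>p" and l2: "?l \<le> \<rho>"
        unfolding \<kappa>p_def \<rho>_def kappa_at_def inv_rho_def using fin by (auto intro: Max_ge)
      have "\<bar>t * ?l\<bar> \<le> t * \<kappa>p" using l1 t0 by (simp add: abs_mult mult_left_mono)
      also have "\<dots> = C * (1 - t * \<rho>)" by (rule Cpos[symmetric])
      also have "\<dots> \<le> C * (1 - t * ?l)" using l2 t0 C0 by (intro mult_left_mono) (auto simp: mult_left_mono)
      also have "\<dots> \<le> C * \<bar>1 - t * ?l\<bar>" using C0 by (intro mult_left_mono) auto
      finally show ?thesis .
    qed
    have "norm (P0 M p - P0 M x) \<le> C"
    proof (rule norm_blinfun_bound[OF C0])
      fix h
      have "blinfun_apply (P0 M p - P0 M x) h = oproj ?T h - D h"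
        by (simp add: blinfun.diff_left PD PD0 D0h)
      also have "\<dots> = - (t *\<^sub>R ?S (D h))" using Dh[of h] by simp
      finally have "norm (blinfun_apply (P0 M p - P0 M x) h) = norm (t *\<^sub>R ?S (D h))" by simp
      also have "\<dots> \<le> C * norm (D h - t *\<^sub>R ?S (D h))"
        by (rule resolvent_bound[OF B weingarten_linear[OF M p] _ C0 bnd]) (use Dh in auto)
      also have "\<dots> = C * norm (oproj ?T h)" using Dh[of h] by simp
      also have "\<dots> \<le> C * norm h" using C0 oproj_norm[OF T] by (intro mult_left_mono) auto
      finally show "norm (blinfun_apply (P0 M p - P0 M x) h) \<le> C * norm h" .
    qed
    moreover have "C \<le> t * \<kappa> / (1 - t * \<kappa>)"
    proof -
      have p2: "1 - t * \<kappa> > 0" using tk1 tR1 by linarith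
      have "inverse (1 - t * \<rho>) \<le> inverse (1 - t * \<kappa>)"
        using trho p2 by (intro le_imp_inverse_le) auto
      then have "\<kappa>p * inverse (1 - t * \<rho>) \<le> \<kappa> * inverse (1 - t * \<kappa>)"
        using kpk kp0 pos by (intro mult_mono) auto
      then have "\<kappa>p * inverse (1 - t * \<rho>) * t \<le> \<kappa> * inverse (1 - t * \<kappa>) * t"
        using t0 by (intro mult_right_mono) auto
      then show ?thesis by (simp add: C_def divide_inverse mult.commute mult.left_commute)
    qed
    moreover have "t * \<kappa> / (1 - t * \<kappa>) \<le> (t / Rr) / (1 - t / Rr)"
    proof (rule frac_le)
      show "0 \<le> t / Rr" using t0 R0 by simp
      show "t * \<kappa> \<le> t / Rr" by (rule tk1)
      show "0 < 1 - t / Rr" using tR1 by simp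
      show "1 - t / Rr \<le> 1 - t * \<kappa>" using tk1 by simp
    qed
    ultimately show ?thesis by (simp add: C_def)
  qed
  then show ?thesis
    using px e1 by (simp add: t_def \<kappa>p_def \<rho>_def \<kappa>_def Rr_def)
qed


end
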